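(* Let us denote by $x_c(x)$ the abscissa of the first collision point of the trajectory starting from $x \in \Sigma$ with the upper boundary of $\hat{D}$. For all $x \in \Sigma$ such that $\alpha(x_c(x))$ is defined, we have \begin{displaymath} f'(x) = \frac{\sin(\theta + \alpha(x_c(x)))}{\sin(\theta-\alpha(x_c(x)))} . \end{displaymath}
   Context: Setting: an internal-wave billiard (a point particle moving at unit speed in a planar table, reflected so that the angles of incident and reflected velocities with the vertical are equal) in a table $D$ of height $1/2$ with horizontal bases, a vertical left side, and right side the graph of a piecewise $C^1$, strictly decreasing, concave function (possibly plus a vertical segment attached to its lower end). The dynamics is unfolded to a linear flow of unit speed and fixed direction $\theta$ (angle with the vertical) on $\hat{D}\subset\mathbb{R}^2$, a 4-fold copy of $D$, whose upper boundary is the graph of an even function $b:[-1/2,1/2]\to\mathbb{R}^+$ that is piecewise $C^1$, concave, and non-increasing on $[0,1/2]$, the lower boundary being its mirror image; opposite boundary points (same abscissa on upper/lower boundary, same ordinate on left/right boundary) are identified. Set $\alpha(x):=\arctan(b'(x))$ (defined except at countably many points), with $\alpha(-1/2)=\alpha_M$, $\alpha(1/2)=-\alpha_M$. The direction satisfies $\theta\in(\alpha_M,\pi/2)$. $\Sigma$ is a horizontal segment of length $1$ spanning $\hat D$ (a cross-section, topologically a circle after the identifications), and $f:\Sigma\to\Sigma$ is the first-return (Poincaré) map of the linear flow; between consecutive returns a trajectory hits the upper boundary once and continues from the opposite point of the lower boundary. *)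

theory Defs
  imports "HOL-Analysis.Analysis"
begin

text \<open>Reduction of an abscissa to the fundamental domain [-1/2,1/2) of the
cross-section \<Sigma> (a circle of length 1 after the identifications).\<close>
definition red :: "real \<Rightarrow> real" where
  "red y = y - of_int \<lfloor>y + 1/2\<rfloor>"

text \<open>Upper boundary of the unfolded table, extended 1-periodically in x
(this encodes the identification of the left and right boundaries).\<close>
definition bper :: "(real \<Rightarrow> real) \<Rightarrow> real \<Rightarrow> real" where
  "bper b y = b (red y)"

text \<open>Time of the first collision with the upper boundary of the linear flow
with velocity (cos \<theta>, sin \<theta>) started at the point (x,0) of \<Sigma>.\<close>
definition coll_time :: "(real \<Rightarrow> real) \<Rightarrow> real \<Rightarrow> real \<Rightarrow> real" where
  "coll_time b \<theta> x = Inf {t. 0 \<le> t \<and> bper b (x + t * cos \<theta>) \<le> t * sin \<theta>}"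

text \<open>Abscissa of the first collision point (on the covering line, and reduced to \<Sigma>).\<close>
definition xc_lift :: "(real \<Rightarrow> real) \<Rightarrow> real \<Rightarrow> real \<Rightarrow> real" where
  "xc_lift b \<theta> x = x + coll_time b \<theta> x * cos \<theta>"

definition xc :: "(real \<Rightarrow> real) \<Rightarrow> real \<Rightarrow> real \<Rightarrow> real" where
  "xc b \<theta> x = red (xc_lift b \<theta> x)"

text \<open>Lift of the first-return map: after hitting the upper boundary at abscissa X
the trajectory continues from the opposite point (X, -b X) of the lower boundary
and returns to \<Sigma> (y = 0) at abscissa X + b X cot \<theta>.\<close>
definition f_lift :: "(real \<Rightarrow> real) \<Rightarrow> real \<Rightarrow> real \<Rightarrow> real" where
  "f_lift b \<theta> x = xc_lift b \<theta> x + bper b (xc_lift b \<theta> x) * cos \<theta> / sin \<theta>"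

definition poincare :: "(real \<Rightarrow> real) \<Rightarrow> real \<Rightarrow> real \<Rightarrow> real" where
  "poincare b \<theta> x = red (f_lift b \<theta> x)"

definition alpha :: "(real \<Rightarrow> real) \<Rightarrow> real \<Rightarrow> real" where
  "alpha b X = arctan (deriv (bper b) X)"

end

theory Submission
  imports Defs
begin

lemma neg_slope_eq: "(- (B::real) - - A) / (-1/2 - s) = - ((A - B) / (s - (-1/2)))"
  by (smt (verit) minus_divide_right)

lemma neg_slope_eq2: "(- (B::real) - - A) / (u - v) = - ((A - B) / (v - u))"
  by (smt (verit) minus_divide_right)

lemma slope_bound:
  fixes b :: "real \<Rightarrow> real" and K :: real
  assumes conc: "concave_on {-1/2..1/2} b"
    and der: "(b has_real_derivative K) (at_right (-1/2))"
    and uv: "-1/2 \<le> u" "u < v" "v \<le> 1/2"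
  shows "b v - b u \<le> K * (v - u)"
proof -
  let ?I = "{-1/2..1/2::real}"
  have cv: "convex_on ?I (\<lambda>x. - b x)" using conc by (simp add: concave_on_def)
  have s1: "(b w - b (-1/2)) / (w + 1/2) \<le> K" if w: "-1/2 < w" "w \<le> 1/2" for w
  proof -
    have lim: "((\<lambda>y. (b y - b (-1/2)) / (y - (-1/2))) \<longlongrightarrow> K) (at_right (-1/2))"
      using der by (simp add: has_field_derivative_iff)
    have ev: "eventually (\<lambda>s. (b w - b (-1/2)) / (w + 1/2) \<le> (b s - b (-1/2)) / (s - (-1/2))) (at_right (-1/2::real))"
      unfolding eventually_at_right_field
    proof (intro exI conjI allI impI)
      show "-1/2 < w" by (rule w(1))
      fix s :: real assume s: "-1/2 < s" "s < w"
      have m1: "-1/2 \<in> ?I" by simp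
      have m2: "w \<in> ?I" using w by simp
      have "((- b (-1/2)) - (- b s)) / (-1/2 - s) \<le> ((- b (-1/2)) - (- b w)) / (-1/2 - w)"
        by (rule convex_on_slope_le(1)[OF cv m1 m2 s])
      then show "(b w - b (-1/2)) / (w + 1/2) \<le> (b s - b (-1/2)) / (s - (-1/2))"
        unfolding neg_slope_eq by simp
    qed
    show ?thesis
      by (rule tendsto_lowerbound[OF lim ev]) simp
  qed
  show ?thesis
  proof (cases "u = -1/2")
    case True
    have "(b v - b (-1/2)) / (v + 1/2) \<le> K" using s1[of v] uv True by linarith
    moreover have "v + 1/2 > 0" using uv True by linarith
    ultimately show ?thesis using True by (simp add: divide_le_eq)
  next
    case False
    then have u: "-1/2 < u" using uv by simp
    have m1: "-1/2 \<in> ?I" by simp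
    have m2: "v \<in> ?I" using uv by simp
    have "((- b (-1/2)) - (- b v)) / (-1/2 - v) \<le> ((- b u) - (- b v)) / (u - v)"
      by (rule convex_on_slope_le(2)[OF cv m1 m2 u uv(2)])
    then have "(b v - b u) / (v - u) \<le> (b v - b (-1/2)) / (v + 1/2)"
      unfolding neg_slope_eq neg_slope_eq2 by simp
    also have "\<dots> \<le> K" using s1[of v] uv by linarith
    finally have "(b v - b u) / (v - u) \<le> K" .
    moreover have "v - u > 0" using uv by linarith
    ultimately show ?thesis by (simp add: divide_le_eq)
  qed
qed

lemma b_lip:
  fixes b :: "real \<Rightarrow> real" and K :: real
  assumes conc: "concave_on {-1/2..1/2} b"
    and der: "(b has_real_derivative K) (at_right (-1/2))"
    and even: "\<forall>y\<in>{-1/2..1/2}. b (-y) = b y"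
    and uv: "u \<in> {-1/2..1/2}" "v \<in> {-1/2..1/2}"
  shows "\<bar>b v - b u\<bar> \<le> K * \<bar>v - u\<bar>"
proof -
  have *: "\<bar>b v - b u\<bar> \<le> K * (v - u)" if "-1/2 \<le> u" "u < v" "v \<le> 1/2" for u v
  proof -
    have 1: "b v - b u \<le> K * (v - u)" using slope_bound[OF conc der] that by auto
    have "b (-u) - b (-v) \<le> K * (-u - (-v))" using slope_bound[OF conc der, of "-v" "-u"] that by auto
    then have 2: "b u - b v \<le> K * (v - u)" using even that by auto
    show ?thesis using 1 2 by linarith
  qed
  consider "u < v" | "u = v" | "v < u" by linarith
  then show ?thesis
  proof cases
    case 1 then show ?thesis using *[of u v] uv by auto
  next
    case 2 then show ?thesis by simp
  next
    case 3 then show ?thesis using *[of v u] uv by (auto simp: abs_minus_commute)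
  qed
qed

lemma red_shift: "red (y + of_int k) = red y"
proof -
  have "\<lfloor>y + of_int k + 1/2\<rfloor> = \<lfloor>y + 1/2\<rfloor> + k"
    by (metis add.commute add.left_commute floor_add_int)
  then show ?thesis unfolding red_def by simp
qed

lemma bper_shift: "bper b (y + of_int k) = bper b y"
  unfolding bper_def by (simp add: red_shift)

lemma red_range: "red y \<in> {-1/2..<1/2}"
  unfolding red_def using floor_correct[of "y + 1/2"] by (auto simp: field_simps)

lemma bper_cell:
  assumes "b (-1/2) = b (1/2)" "of_int k - 1/2 \<le> y" "y \<le> of_int k + 1/2"
  shows "bper b y = b (y - of_int k)"
proof (cases "y = of_int k + 1/2")
  case True
  then have e: "y + 1/2 = of_int (k + 1)" by simp
  have "\<lfloor>y + 1/2\<rfloor> = k + 1" unfolding e by (rule floor_of_int)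
  then have "red y = -1/2" unfolding red_def using True by simp
  then show ?thesis using True assms(1) unfolding bper_def by simp
next
  case False
  then have "\<lfloor>y + 1/2\<rfloor> = k" using assms(2,3) by (intro floor_unique) auto
  then show ?thesis unfolding bper_def red_def by simp
qed

lemma bper_lip:
  fixes b :: "real \<Rightarrow> real" and K :: real
  assumes ends: "b (-1/2) = b (1/2)"
    and lip: "\<And>u v. u \<in> {-1/2..1/2} \<Longrightarrow> v \<in> {-1/2..1/2} \<Longrightarrow> \<bar>b v - b u\<bar> \<le> K * \<bar>v - u\<bar>"
  shows "\<bar>bper b z - bper b y\<bar> \<le> K * \<bar>z - y\<bar>"
proof -
  have cell: "\<bar>bper b z - bper b y\<bar> \<le> K * (z - y)"
    if "of_int k - 1/2 \<le> y" "y \<le> z" "z \<le> of_int k + 1/2" for k y z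
  proof -
    have "bper b y = b (y - of_int k)" "bper b z = b (z - of_int k)"
      using bper_cell[OF ends] that by auto
    then show ?thesis using lip[of "y - of_int k" "z - of_int k"] that by auto
  qed
  have P: "\<forall>y z. y \<le> z \<longrightarrow> z \<le> of_int \<lfloor>y + 1/2\<rfloor> + 1/2 + of_nat n \<longrightarrow>
      \<bar>bper b z - bper b y\<bar> \<le> K * (z - y)" for n
  proof (induction n)
    case 0
    show ?case
    proof (intro allI impI)
      fix y z :: real assume yz: "y \<le> z" "z \<le> of_int \<lfloor>y + 1/2\<rfloor> + 1/2 + of_nat 0"
      show "\<bar>bper b z - bper b y\<bar> \<le> K * (z - y)"
        using cell[of "\<lfloor>y + 1/2\<rfloor>" y z] yz floor_correct[of "y + 1/2"] by auto
    qed
  next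
    case (Suc n)
    show ?case
    proof (intro allI impI)
      fix y z :: real assume yz: "y \<le> z" "z \<le> of_int \<lfloor>y + 1/2\<rfloor> + 1/2 + of_nat (Suc n)"
      show "\<bar>bper b z - bper b y\<bar> \<le> K * (z - y)"
      proof (cases "z \<le> of_int \<lfloor>y + 1/2\<rfloor> + 1/2 + of_nat n")
        case True then show ?thesis using Suc yz by blast
      next
        case False
        define w where "w = of_int \<lfloor>y + 1/2\<rfloor> + 1/2 + real n"
        have yw: "y \<le> w"
        proof -
          have "y + 1/2 < of_int \<lfloor>y + 1/2\<rfloor> + 1" using floor_correct[of "y + 1/2"] by linarith
          moreover have "(0::real) \<le> real n" by simp
          ultimately show ?thesis unfolding w_def by linarith
        qed
        have 1: "\<bar>bper b w - bper b y\<bar> \<le> K * (w - y)"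
          using Suc yw unfolding w_def by auto
        have 2: "\<bar>bper b z - bper b w\<bar> \<le> K * (z - w)"
          using cell[of "\<lfloor>y + 1/2\<rfloor> + int n + 1" w z] False yz unfolding w_def by auto
        have "\<bar>bper b z - bper b y\<bar> \<le> \<bar>bper b z - bper b w\<bar> + \<bar>bper b w - bper b y\<bar>" by linarith
        also have "\<dots> \<le> K * (z - w) + K * (w - y)" using 1 2 by linarith
        also have "\<dots> = K * (z - y)" by (simp add: algebra_simps)
        finally show ?thesis .
      qed
    qed
  qed
  have ord: "\<bar>bper b z - bper b y\<bar> \<le> K * (z - y)" if "y \<le> z" for y z
  proof -
    define n where "n = nat \<lceil>z - of_int \<lfloor>y + 1/2\<rfloor> - 1/2\<rceil>"
    have "z \<le> of_int \<lfloor>y + 1/2\<rfloor> + 1/2 + of_nat n"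
      using real_nat_ceiling_ge[of "z - of_int \<lfloor>y + 1/2\<rfloor> - 1/2"] unfolding n_def by linarith
    then show ?thesis using P[of n] that by blast
  qed
  show ?thesis
  proof (cases "y \<le> z")
    case True then show ?thesis using ord by simp
  next
    case False then show ?thesis using ord[of z y] by (simp add: abs_minus_commute)
  qed
qed

theorem lemma2p1:
  fixes b :: "real \<Rightarrow> real" and \<theta> bd x :: real
  assumes "b piecewise_C1_differentiable_on {-1/2..1/2}"
    and "concave_on {-1/2..1/2} b"
    and "\<forall>y\<in>{-1/2..1/2}. b y > 0"
    and "\<forall>y\<in>{-1/2..1/2}. b (-y) = b y"
    and "\<forall>y z. 0 \<le> y \<longrightarrow> y \<le> z \<longrightarrow> z \<le> 1/2 \<longrightarrow> b z \<le> b y"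
    and "(b has_real_derivative bd) (at_right (-1/2))"
    and "arctan bd < \<theta>" and "\<theta> < pi/2"
    and "x \<in> {-1/2..<1/2}"
    and "bper b differentiable (at (xc b \<theta> x))"
  shows "(f_lift b \<theta> has_real_derivative
            sin (\<theta> + alpha b (xc b \<theta> x)) / sin (\<theta> - alpha b (xc b \<theta> x))) (at x)"
proof -
  note conc = assms(2) and bpos = assms(3) and even = assms(4) and der = assms(6)
  define K where "K = bd"
  have ends: "b (-1/2) = b (1/2)" using even by auto
  have blip: "\<And>u v. u \<in> {-1/2..1/2} \<Longrightarrow> v \<in> {-1/2..1/2} \<Longrightarrow> \<bar>b v - b u\<bar> \<le> K * \<bar>v - u\<bar>"
    using b_lip[OF conc der even] unfolding K_def by blast
  have lip: "\<And>y z. \<bar>bper b z - bper b y\<bar> \<le> K * \<bar>z - y\<bar>"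
    using bper_lip[OF ends blip] by blast
  have K0: "0 \<le> K"
  proof -
    have "\<bar>b 0 - b (-1/2)\<bar> \<le> K * \<bar>0 - (-1/2)\<bar>" by (rule blip) auto
    then have "\<bar>b 0 - b (-1/2)\<bar> \<le> K * (1/2)" by simp
    moreover have "0 \<le> \<bar>b 0 - b (-1/2)\<bar>" by (rule abs_ge_zero)
    ultimately show ?thesis by linarith
  qed
  have pos: "bper b y > 0" for y
  proof -
    have "red y \<in> {-1/2..1/2}" using red_range[of y] by auto
    then show ?thesis unfolding bper_def using bpos by blast
  qed
  define c where "c = cos \<theta>"
  define s where "s = sin \<theta>"
  have ath: "0 \<le> arctan K" using K0 by (simp add: zero_le_arctan_iff)
  have th0: "0 < \<theta>" using ath assms(7) unfolding K_def by linarith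
  have c0: "0 < c" unfolding c_def using th0 assms(8) by (intro cos_gt_zero_pi) auto
  have s0: "0 < s" unfolding s_def using th0 assms(8) by (intro sin_gt_zero) auto
  have "tan (arctan K) < tan \<theta>"
    using assms(7,8) arctan_lbound[of K] unfolding K_def by (intro tan_monotone) auto
  then have "K < tan \<theta>" by (simp only: tan_arctan)
  then have "K < s / c" by (simp only: tan_def s_def c_def)
  then have Kcs: "K * c < s" using c0 by (simp add: field_simps)
  define r where "r = c / s"
  have r0: "0 < r" unfolding r_def using c0 s0 by simp
  have Kr: "K * r < 1" unfolding r_def using Kcs s0 by (simp add: field_simps)
  define \<psi> where "\<psi> = (\<lambda>y. y - bper b y * cos \<theta> / sin \<theta>)"
  have psi_r: "\<psi> y = y - bper b y * r" for y
    unfolding \<psi>_def r_def c_def s_def by simp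
  have bcont: "continuous_on UNIV (bper b)"
  proof (rule lipschitz_on_continuous_on)
    show "K-lipschitz_on UNIV (bper b)"
      using lip K0 by (auto simp: lipschitz_on_def dist_real_def)
  qed
  have bisc: "isCont (bper b) y" for y
    using bcont by (simp add: continuous_on_eq_continuous_at)
  have psi_cont: "continuous_on UNIV \<psi>"
    unfolding \<psi>_def by (intro continuous_intros bcont) (use s0 s_def in auto)
  have key: "xc_lift b \<theta> x0 = X" if h: "\<psi> X = x0" for x0 X
  proof -
    have bX: "bper b X * r = X - x0" using h psi_r[of X] by linarith
    have Xx: "0 < X - x0" using bX mult_pos_pos[OF pos[of X] r0] by linarith
    define T where "T = (X - x0) / c"
    have T0: "0 \<le> T" unfolding T_def using Xx c0 by simp
    have XT: "x0 + T * c = X" unfolding T_def using c0 by simp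
    have bX2: "bper b X = (X - x0) / r" using bX r0 by (simp add: eq_divide_eq)
    have bXT: "bper b X = T * s" unfolding bX2 T_def r_def by simp
    have "coll_time b \<theta> x0 = T"
      unfolding coll_time_def c_def[symmetric] s_def[symmetric]
    proof (rule cInf_eq_minimum)
      show "T \<in> {t. 0 \<le> t \<and> bper b (x0 + t * c) \<le> t * s}"
        using T0 XT bXT by simp
    next
      fix t assume "t \<in> {t. 0 \<le> t \<and> bper b (x0 + t * c) \<le> t * s}"
      then have t: "0 \<le> t" "bper b (x0 + t * c) \<le> t * s" by auto
      show "T \<le> t"
      proof (rule ccontr)
        assume "\<not> T \<le> t"
        then have tT: "t < T" by simp
        define Y where "Y = x0 + t * c"
        have YX: "Y < X" using mult_strict_right_mono[OF tT c0] XT unfolding Y_def by linarith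
        have e1: "(T - t) * s = T * s - t * s" by (rule left_diff_distrib)
        have A: "bper b X - bper b Y \<ge> (T - t) * s" using t(2) bXT e1 unfolding Y_def by linarith
        have e2: "(T - t) * c = T * c - t * c" by (rule left_diff_distrib)
        have B: "X - Y = (T - t) * c" using XT e2 unfolding Y_def by linarith
        have ab: "\<bar>X - Y\<bar> = X - Y" using YX by simp
        have L: "bper b X - bper b Y \<le> K * (X - Y)"
          using lip[where y=Y and z=X] ab abs_ge_self[of "bper b X - bper b Y"] by linarith
        have tT0: "0 < T - t" using tT by simp
        have M: "K * c * (T - t) < s * (T - t)" by (rule mult_strict_right_mono[OF Kcs tT0])
        have e3: "K * (X - Y) = K * c * (T - t)" unfolding B by (simp add: mult_ac)
        have e4: "(T - t) * s = s * (T - t)" by (simp add: mult_ac)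
        show False using A L M e3 e4 by linarith
      qed
    qed
    then show ?thesis unfolding xc_lift_def c_def[symmetric] using XT by simp
  qed
  have exist: "\<exists>X. \<psi> X = x0" for x0
  proof -
    have p1: "0 < bper b x0 * r" by (rule mult_pos_pos[OF pos r0])
    have p2: "0 < 1 - K * r" using Kr by simp
    define t where "t = bper b x0 * r / (1 - K * r)"
    have t0: "0 \<le> t" unfolding t_def by (rule less_imp_le[OF divide_pos_pos[OF p1 p2]])
    have "\<psi> x0 \<le> x0" using psi_r[of x0] p1 by linarith
    moreover have "x0 \<le> \<psi> (x0 + t)"
    proof -
      have l: "\<bar>bper b (x0 + t) - bper b x0\<bar> \<le> K * t" using lip[where y=x0 and z="x0 + t"] t0 by simp
      have "bper b (x0 + t) \<le> bper b x0 + K * t"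
        using l abs_ge_self[of "bper b (x0 + t) - bper b x0"] by linarith
      then have q: "bper b (x0 + t) * r \<le> (bper b x0 + K * t) * r"
        by (rule mult_right_mono[OF _ less_imp_le[OF r0]])
      have e0: "t * (1 - K * r) = bper b x0 * r" unfolding t_def using p2 by simp
      have e1: "(bper b x0 + K * t) * r = bper b x0 * r + K * (t * r)" by (simp add: algebra_simps)
      have e2: "t * (1 - K * r) = t - K * (t * r)" by (simp add: algebra_simps)
      show ?thesis using psi_r[of "x0 + t"] q e0 e1 e2 by linarith
    qed
    moreover have "continuous_on {x0..x0 + t} \<psi>"
      by (rule continuous_on_subset[OF psi_cont subset_UNIV])
    ultimately obtain X where "\<psi> X = x0"
      using IVT'[of \<psi> x0 x0 "x0 + t"] t0 by auto
    then show ?thesis by blast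
  qed
  define g where "g = xc_lift b \<theta>"
  have fg: "\<psi> (g y) = y" for y using exist[of y] key unfolding g_def by metis
  have gf: "g (\<psi> z) = z" for z using key unfolding g_def by blast
  have gcont: "isCont g x"
  proof -
    have pisc: "isCont \<psi> z" for z
      using psi_cont by (simp add: continuous_on_eq_continuous_at)
    have "isCont g (\<psi> (g x))"
      by (rule isCont_inverse_function[where d=1 and f=\<psi> and g=g and x="g x"]) (use gf pisc in auto)
    then show ?thesis using fg by simp
  qed
  define d where "d = deriv (bper b) (xc b \<theta> x)"
  define k where "k = \<lfloor>g x + 1/2\<rfloor>"
  have xcr: "xc b \<theta> x = g x + of_int (- k)" unfolding xc_def g_def k_def red_def by simp
  have "(bper b has_real_derivative d) (at (xc b \<theta> x))"
    using assms(10) unfolding d_def by (simp add: DERIV_deriv_iff_real_differentiable)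
  then have "((\<lambda>y. bper b (y + of_int (- k))) has_real_derivative d) (at (g x))"
    unfolding xcr by (simp only: DERIV_shift)
  then have dB: "(bper b has_real_derivative d) (at (g x))" by (simp only: bper_shift)
  have dK: "d \<le> K"
  proof -
    have lim: "((\<lambda>h. (bper b (g x + h) - bper b (g x)) / h) \<longlongrightarrow> d) (at 0)"
      using dB by (simp add: DERIV_def)
    have "eventually (\<lambda>h. (bper b (g x + h) - bper b (g x)) / h \<le> K) (at (0::real))"
    proof (rule always_eventually, rule allI)
      fix h :: real
      show "(bper b (g x + h) - bper b (g x)) / h \<le> K"
      proof (cases "h = 0")
        case True then show ?thesis using K0 by simp
      next
        case False
        have "(bper b (g x + h) - bper b (g x)) / h \<le> \<bar>bper b (g x + h) - bper b (g x)\<bar> / \<bar>h\<bar>"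
          by (metis abs_divide abs_ge_self)
        also have "\<dots> \<le> K * \<bar>h\<bar> / \<bar>h\<bar>" using lip[where y="g x" and z="g x + h"] False
          by (intro divide_right_mono) auto
        also have "\<dots> = K" using False by simp
        finally show ?thesis .
      qed
    qed
    then show ?thesis using tendsto_upperbound[OF lim] by simp
  qed
  have D0: "1 - d * r > 0"
  proof -
    have "d * r \<le> K * r" using dK r0 by (simp add: mult_right_mono)
    then show ?thesis using Kr by simp
  qed
  have dpsi: "(\<psi> has_real_derivative (1 - d * r)) (at (g x))"
    unfolding psi_r[abs_def] by (auto intro!: derivative_eq_intros dB)
  have dg: "(g has_real_derivative inverse (1 - d * r)) (at x)"
    by (rule DERIV_inverse_function[OF dpsi _ _ _ _ gcont, of "x - 1" "x + 1"])
       (use D0 fg in auto)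
  have feq: "f_lift b \<theta> = (\<lambda>y. 2 * g y - y)"
  proof
    fix y
    have "bper b (g y) * cos \<theta> / sin \<theta> = g y - y" using fg[of y] unfolding \<psi>_def by simp
    then show "f_lift b \<theta> y = 2 * g y - y" unfolding f_lift_def g_def by simp
  qed
  have df: "(f_lift b \<theta> has_real_derivative (2 * inverse (1 - d * r) - 1)) (at x)"
    unfolding feq by (auto intro!: derivative_eq_intros dg)
  have "sin (\<theta> + alpha b (xc b \<theta> x)) / sin (\<theta> - alpha b (xc b \<theta> x)) = 2 * inverse (1 - d * r) - 1"
  proof -
    define q where "q = sqrt (1 + d\<^sup>2)"
    have q0: "0 < q" unfolding q_def by (simp add: add_pos_nonneg)
    have al: "alpha b (xc b \<theta> x) = arctan d" unfolding alpha_def d_def by simp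
    have n: "sin (\<theta> + arctan d) = (s + c * d) / q"
      by (simp add: sin_add cos_arctan sin_arctan q_def s_def c_def add_divide_distrib)
    have m: "sin (\<theta> - arctan d) = (s - c * d) / q"
      by (simp add: sin_diff cos_arctan sin_arctan q_def s_def c_def diff_divide_distrib)
    have sd: "s - c * d > 0" using D0 s0 unfolding r_def by (simp add: field_simps)
    show ?thesis unfolding al n m r_def using q0 sd s0
      by (simp add: field_simps)
  qed
  then show ?thesis using df by simp
qed

end
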